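(* Let $N\ge 1$ and let $\mathcal H_1,\dots,\mathcal H_N$ be finite-dimensional complex Hilbert spaces. Let $B$ be a finite set with $|B|=\prod_{j=1}^N \dim \mathcal H_j$ and let $(\psi_b)_{b\in B}$ be an orthonormal basis of $\bigotimes_{j=1}^N \mathcal H_j$. (i) If there exists an LOCC protocol (in the sense of the context; its local instruments and global classical operations are allowed to be unnormalised) which perfectly distinguishes the family $(\psi_b)_{b\in B}$, then no $\psi_b$ is entangled, i.e. every $\psi_b$ is a product state $\psi_b=\psi_{b,1}\otimes\cdots\otimes\psi_{b,N}$ with $\psi_{b,i}\in\mathcal H_i$. (ii) Conversely, if every $\psi_b$ is a product state, then there exists a unital LOCC protocol (possibly involving unnormalised local instruments/global classical operations) which perfectly distinguishes the family $(\psi_b)_{b\in B}$.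
   Context: Processes: quantum systems are finite-dimensional Hilbert spaces (acting on density operators), classical systems are finite sets $X$ (states are vectors in $(\mathbb R^{+})^X$). A process is a completely positive (CP) map between tensor products of quantum and classical systems, classical parts being treated as diagonal/commutative; a purely classical process $X\to Y$ is a $Y\times X$ matrix with non-negative real entries. A process is normalised if it is trace-preserving (on classical systems: its matrix is column-stochastic); "unnormalised" means no such requirement is imposed. A process is unital if it maps the identity operator on each quantum input (and the all-ones vector on each classical input) to the identity operator on each quantum output (resp. the all-ones vector on each classical output). Local instrument for party $i$: a CP process with one classical input and one quantum input of party $i$, and one classical output and one quantum output of party $i$ (the quantum systems of party $i$ being finite-dimensional Hilbert spaces, the first quantum input being $\mathcal H_i$). LOCC protocol with $R\ge1$ rounds: in each round $r$, first a global classical operation (a non-negative matrix) is applied, taking the classical outputs of all parties' local instruments from round $r-1$ to classical inputs of all parties for round $r$ (for $r=1$ this is a global classical state, with no inputs), and then each party $i$ applies a local instrument $M_i^{(r)}$ to its classical input and its current quantum system; the non-classical systems are untouched by the global classical operations. After round $R$, a global classical post-processing (non-negative matrix) maps the classical outputs of the parties' last instruments to a classical output in $B$, and the remaining quantum systems are discarded (traced out). Such a protocol perfectly distinguishes $(\psi_b)_{b\in B}$ if, for every $b\in B$, applying it to the input state $|\psi_b\rangle\langle\psi_b|$ on $\bigotimes_j\mathcal H_j$ yields exactly the point distribution $\delta_b$ on $B$. The protocol is called unital if the overall process it implements is unital. *)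

theory Defs
  imports Complex_Main "HOL-Library.FuncSet"
begin

text \<open>
  Party i (for i < N) holds a quantum system of dimension dims i, i.e. the Hilbert space
  C^(dims i).  The joint Hilbert space (tensor product of the parties' spaces) is modelled
  concretely with basis indexed by multi-indices j with j i < dims i for i < N.  Only values at valid multi-indices matter.
\<close>

type_synonym mindex = "nat \<Rightarrow> nat"
type_synonym jvec = "mindex \<Rightarrow> complex"
type_synonym jop = "mindex \<Rightarrow> mindex \<Rightarrow> complex"
type_synonym lmat = "nat \<Rightarrow> nat \<Rightarrow> complex"

definition Idx :: "nat \<Rightarrow> (nat \<Rightarrow> nat) \<Rightarrow> mindex set" where
  "Idx N dims = PiE {..<N} (\<lambda>i. {..<dims i})"

definition jinner :: "nat \<Rightarrow> (nat \<Rightarrow> nat) \<Rightarrow> jvec \<Rightarrow> jvec \<Rightarrow> complex" where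
  "jinner N dims u v = (\<Sum>j\<in>Idx N dims. cnj (u j) * v j)"

definition orthonormal_family :: "nat \<Rightarrow> (nat \<Rightarrow> nat) \<Rightarrow> 'b set \<Rightarrow> ('b \<Rightarrow> jvec) \<Rightarrow> bool" where
  "orthonormal_family N dims B \<psi> \<longleftrightarrow>
     (\<forall>b\<in>B. \<forall>b'\<in>B. jinner N dims (\<psi> b) (\<psi> b') = (if b = b' then 1 else 0))"

text \<open>An orthonormal basis of the joint space indexed by B (spanning follows from the
  cardinality condition, but we also state it explicitly).\<close>
definition orthonormal_basis :: "nat \<Rightarrow> (nat \<Rightarrow> nat) \<Rightarrow> 'b set \<Rightarrow> ('b \<Rightarrow> jvec) \<Rightarrow> bool" where
  "orthonormal_basis N dims B \<psi> \<longleftrightarrow>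
     orthonormal_family N dims B \<psi> \<and>
     (\<forall>v::jvec. \<exists>a::'b \<Rightarrow> complex. \<forall>j\<in>Idx N dims. v j = (\<Sum>b\<in>B. a b * \<psi> b j))"

definition product_state :: "nat \<Rightarrow> (nat \<Rightarrow> nat) \<Rightarrow> jvec \<Rightarrow> bool" where
  "product_state N dims \<psi> \<longleftrightarrow>
     (\<exists>\<phi>::nat \<Rightarrow> nat \<Rightarrow> complex. \<forall>j\<in>Idx N dims. \<psi> j = (\<Prod>i<N. \<phi> i (j i)))"

definition proj :: "jvec \<Rightarrow> jop" where
  "proj \<psi> = (\<lambda>j l. \<psi> j * cnj (\<psi> l))"

definition id_op :: jop where
  "id_op = (\<lambda>j l. if j = l then 1 else 0)"

text \<open>
  For round r (1 \<le> r \<le> R) and party i: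
  \<^item> nin P r i  : size of the classical input set {..<nin P r i} of party i's instrument;
  \<^item> nout P r i : size of the classical output set {..<nout P r i};
  \<^item> qdim P r i : dimension of party i's quantum system after round r (qdim P 0 i is the
                 dimension of the initial space H_i);
  \<^item> gop P r c w : entry of the global classical operation of round r (a non-negative matrix
                 from the tuples of round r-1 outputs to the tuples of round r inputs);
                 for r = 1 there is a unique (dummy) tuple of "round 0 outputs", so gop P 1
                 is a global classical state;
  \<^item> instr P r i y x : a list of Kraus operators (qdim P r i \<times> qdim P (r-1) i matrices)
                 of the CP map from party i's quantum system to its new quantum system
                 occurring with classical input x and classical output y.  A CP map between
                 (classical (+) quantum) systems with diagonal classical parts is exactly such
                 a family of CP maps indexed by (output, input) pairs, and each such CP map
                 is given by finitely many Kraus operators;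
  \<^item> post P b w : the global classical post-processing (non-negative matrix from tuples of
                 round R outputs to B).
\<close>
record 'b locc =
  rounds :: nat
  qdim :: "nat \<Rightarrow> nat \<Rightarrow> nat"
  nin :: "nat \<Rightarrow> nat \<Rightarrow> nat"
  nout :: "nat \<Rightarrow> nat \<Rightarrow> nat"
  gop :: "nat \<Rightarrow> mindex \<Rightarrow> mindex \<Rightarrow> real"
  instr :: "nat \<Rightarrow> nat \<Rightarrow> nat \<Rightarrow> nat \<Rightarrow> lmat list"
  post :: "'b \<Rightarrow> mindex \<Rightarrow> real"

definition locc_wf :: "nat \<Rightarrow> (nat \<Rightarrow> nat) \<Rightarrow> 'b locc \<Rightarrow> bool" where
  "locc_wf N dims P \<longleftrightarrow>
     rounds P \<ge> 1 \<and>
     (\<forall>i<N. qdim P 0 i = dims i) \<and>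
     (\<forall>r c w. gop P r c w \<ge> 0) \<and>
     (\<forall>b w. post P b w \<ge> 0)"

definition Ins :: "nat \<Rightarrow> 'b locc \<Rightarrow> nat \<Rightarrow> mindex set" where
  "Ins N P r = Idx N (nin P r)"

definition Outs :: "nat \<Rightarrow> 'b locc \<Rightarrow> nat \<Rightarrow> mindex set" where
  "Outs N P r = Idx N (\<lambda>i. if r = 0 then 1 else nout P r i)"

definition ktensor :: "nat \<Rightarrow> (nat \<Rightarrow> lmat) \<Rightarrow> jop" where
  "ktensor N K = (\<lambda>j' j. \<Prod>i<N. K i (j' i) (j i))"

definition conj_by :: "nat \<Rightarrow> (nat \<Rightarrow> nat) \<Rightarrow> jop \<Rightarrow> jop \<Rightarrow> jop" where
  "conj_by N din K \<sigma> = (\<lambda>j' l'. \<Sum>j\<in>Idx N din. \<Sum>l\<in>Idx N din. K j' j * \<sigma> j l * cnj (K l' l))"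

definition local_apply :: "nat \<Rightarrow> 'b locc \<Rightarrow> nat \<Rightarrow> mindex \<Rightarrow> mindex \<Rightarrow> jop \<Rightarrow> jop" where
  "local_apply N P r w c \<sigma> = (\<lambda>j' l'.
     \<Sum>k\<in>PiE {..<N} (\<lambda>i. {..<length (instr P r i (w i) (c i))}).
       conj_by N (qdim P (r - 1)) (ktensor N (\<lambda>i. instr P r i (w i) (c i) ! k i)) \<sigma> j' l')"

text \<open>The (unnormalised) joint quantum state after round r, indexed by the tuple of
  classical outputs of round r (for r = 0 the input state, with a dummy outcome tuple).\<close>
primrec qstate :: "nat \<Rightarrow> 'b locc \<Rightarrow> jop \<Rightarrow> nat \<Rightarrow> mindex \<Rightarrow> jop" where
  "qstate N P \<rho> 0 = (\<lambda>w. \<rho>)"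
| "qstate N P \<rho> (Suc r) = (\<lambda>w. \<lambda>j' l'.
     \<Sum>c\<in>Ins N P (Suc r).
       local_apply N P (Suc r) w c
         (\<lambda>j l. \<Sum>w'\<in>Outs N P r. complex_of_real (gop P (Suc r) c w') * qstate N P \<rho> r w' j l) j' l')"

text \<open>The (unnormalised) value of the output distribution on B at b, after tracing out the
  remaining quantum systems.\<close>
definition locc_output :: "nat \<Rightarrow> 'b locc \<Rightarrow> jop \<Rightarrow> 'b \<Rightarrow> complex" where
  "locc_output N P \<rho> b =
     (\<Sum>w\<in>Outs N P (rounds P). complex_of_real (post P b w) *
        (\<Sum>j\<in>Idx N (qdim P (rounds P)). qstate N P \<rho> (rounds P) w j j))"

definition perfectly_distinguishes :: "nat \<Rightarrow> 'b locc \<Rightarrow> 'b set \<Rightarrow> ('b \<Rightarrow> jvec) \<Rightarrow> bool" where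
  "perfectly_distinguishes N P B \<psi> \<longleftrightarrow>
     (\<forall>b\<in>B. \<forall>b'\<in>B. locc_output N P (proj (\<psi> b)) b' = (if b' = b then 1 else 0))"

text \<open>The overall process (no classical input, no quantum output, classical output B)
  is unital: it maps the identity on the joint input space to the all-ones vector on B.\<close>
definition locc_unital :: "nat \<Rightarrow> 'b locc \<Rightarrow> 'b set \<Rightarrow> bool" where
  "locc_unital N P B \<longleftrightarrow> (\<forall>b\<in>B. locc_output N P id_op b = 1)"

end

theory Submission
  imports Defs
begin

inductive SEP :: "nat \<Rightarrow> (nat\<Rightarrow>nat) \<Rightarrow> (jop \<Rightarrow> jop) \<Rightarrow> bool" for N din where
  zero: "SEP N din (\<lambda>\<rho> j l. 0)"
| sterm: "c \<ge> 0 \<Longrightarrow> SEP N din (\<lambda>\<rho> j l. complex_of_real c * conj_by N din (ktensor N k) \<rho> j l)"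
| add: "SEP N din f \<Longrightarrow> SEP N din g \<Longrightarrow> SEP N din (\<lambda>\<rho> j l. f \<rho> j l + g \<rho> j l)"

lemma SEP_sum:
  assumes "finite A" "\<And>a. a \<in> A \<Longrightarrow> SEP N din (F a)"
  shows "SEP N din (\<lambda>\<rho> j l. \<Sum>a\<in>A. F a \<rho> j l)"
  using assms
proof (induction A rule: finite_induct)
  case empty then show ?case by (simp add: SEP.zero)
next
  case (insert x A)
  have "SEP N din (\<lambda>\<rho> j l. F x \<rho> j l + (\<Sum>a\<in>A. F a \<rho> j l))"
    using insert by (intro SEP.add) auto
  then show ?case using insert by simp
qed

lemma SEP_scale:
  assumes "SEP N din f" "c \<ge> 0"
  shows "SEP N din (\<lambda>\<rho> j l. complex_of_real c * f \<rho> j l)"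
  using assms
proof (induction rule: SEP.induct)
  case zero then show ?case by (simp add: SEP.zero)
next
  case (sterm c' k)
  have "SEP N din (\<lambda>\<rho> j l. complex_of_real (c * c') * conj_by N din (ktensor N k) \<rho> j l)"
    using sterm by (intro SEP.sterm) simp
  then show ?case by (simp add: mult.assoc)
next
  case (add f g)
  have "SEP N din (\<lambda>\<rho> j l. complex_of_real c * f \<rho> j l + complex_of_real c * g \<rho> j l)"
    using add by (intro SEP.add) auto
  then show ?case by (simp add: distrib_left)
qed

lemma conj_by_cong:
  assumes "\<And>j l. j \<in> Idx N d \<Longrightarrow> l \<in> Idx N d \<Longrightarrow> \<sigma> j l = \<sigma>' j l"
  shows "conj_by N d K \<sigma> = conj_by N d K \<sigma>'"
  unfolding conj_by_def using assms by (intro ext sum.cong refl) auto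

lemma conj_by_add: "conj_by N d K (\<lambda>j l. f j l + g j l) j' l' = conj_by N d K f j' l' + conj_by N d K g j' l'"
  unfolding conj_by_def by (simp add: distrib_left distrib_right sum.distrib)

lemma conj_by_scale: "conj_by N d K (\<lambda>j l. c * f j l) j' l' = c * conj_by N d K f j' l'"
  unfolding conj_by_def by (simp add: sum_distrib_left mult_ac)

lemma conj_by_zero: "conj_by N d K (\<lambda>j l. 0) j' l' = 0"
  unfolding conj_by_def by simp

lemma conj_by_comp:
  "conj_by N d2 K2 (conj_by N d1 K1 \<rho>) j' l' =
   conj_by N d1 (\<lambda>a m. \<Sum>j\<in>Idx N d2. K2 a j * K1 j m) \<rho> j' l'"
proof -
  have "conj_by N d1 (\<lambda>a m. \<Sum>j\<in>Idx N d2. K2 a j * K1 j m) \<rho> j' l' =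
     (\<Sum>m\<in>Idx N d1. \<Sum>n\<in>Idx N d1. \<Sum>j\<in>Idx N d2. \<Sum>l\<in>Idx N d2.
        K2 j' j * (K1 j m * \<rho> m n * cnj (K1 l n)) * cnj (K2 l' l))"
    unfolding conj_by_def
    by (simp add: sum_distrib_left sum_distrib_right mult_ac)
  also have "\<dots> = (\<Sum>m\<in>Idx N d1. \<Sum>j\<in>Idx N d2. \<Sum>n\<in>Idx N d1. \<Sum>l\<in>Idx N d2.
        K2 j' j * (K1 j m * \<rho> m n * cnj (K1 l n)) * cnj (K2 l' l))"
    by (rule sum.cong[OF refl], rule sum.swap)
  also have "\<dots> = (\<Sum>j\<in>Idx N d2. \<Sum>m\<in>Idx N d1. \<Sum>n\<in>Idx N d1. \<Sum>l\<in>Idx N d2.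
        K2 j' j * (K1 j m * \<rho> m n * cnj (K1 l n)) * cnj (K2 l' l))"
    by (rule sum.swap)
  also have "\<dots> = (\<Sum>j\<in>Idx N d2. \<Sum>m\<in>Idx N d1. \<Sum>l\<in>Idx N d2. \<Sum>n\<in>Idx N d1.
        K2 j' j * (K1 j m * \<rho> m n * cnj (K1 l n)) * cnj (K2 l' l))"
    by (rule sum.cong[OF refl], rule sum.cong[OF refl], rule sum.swap)
  also have "\<dots> = (\<Sum>j\<in>Idx N d2. \<Sum>l\<in>Idx N d2. \<Sum>m\<in>Idx N d1. \<Sum>n\<in>Idx N d1.
        K2 j' j * (K1 j m * \<rho> m n * cnj (K1 l n)) * cnj (K2 l' l))"
    by (rule sum.cong[OF refl], rule sum.swap)
  also have "\<dots> = conj_by N d2 K2 (conj_by N d1 K1 \<rho>) j' l'"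
    unfolding conj_by_def
    by (simp add: sum_distrib_left sum_distrib_right mult_ac)
  finally show ?thesis by simp
qed

lemma ktensor_comp:
  "(\<Sum>j\<in>Idx N d2. ktensor N A a j * ktensor N B j m) =
   ktensor N (\<lambda>i x y. \<Sum>z<d2 i. A i x z * B i z y) a m"
  unfolding ktensor_def Idx_def
  by (subst prod_sum_PiE) (auto simp: prod.distrib)

lemma SEP_conj:
  assumes "SEP N d1 f"
  shows "SEP N d1 (\<lambda>\<rho>. conj_by N d2 (ktensor N A) (f \<rho>))"
  using assms
proof (induction rule: SEP.induct)
  case zero then show ?case by (simp add: conj_by_zero SEP.zero)
next
  case (sterm c k)
  have "SEP N d1 (\<lambda>\<rho> j l. complex_of_real c * conj_by N d1 (ktensor N (\<lambda>i x y. \<Sum>z<d2 i. A i x z * k i z y)) \<rho> j l)"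
    using sterm by (rule SEP.sterm)
  then show ?case
    by (simp add: conj_by_scale conj_by_comp ktensor_comp)
next
  case (add f g)
  then show ?case using SEP.add[OF add.IH] by (simp add: conj_by_add)
qed

lemma Idx_cong: "(\<And>i. i < N \<Longrightarrow> d i = d' i) \<Longrightarrow> Idx N d = Idx N d'"
  unfolding Idx_def by (intro PiE_cong) auto

lemma finite_Idx[simp]: "finite (Idx N d)"
  unfolding Idx_def by (intro finite_PiE) auto

lemma ktensor_delta:
  assumes "j \<in> Idx N d" "a \<in> Idx N d"
  shows "ktensor N (\<lambda>i x y. if x = y then 1 else 0) j a = (if j = a then 1 else 0)"
proof (cases "j = a")
  case True then show ?thesis by (simp add: ktensor_def)
next
  case False
  then obtain i where "i < N" "j i \<noteq> a i"
    using assms unfolding Idx_def by (metis PiE_ext lessThan_iff)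
  then have "(\<Prod>i<N. if j i = a i then 1 else 0::complex) = 0"
    by (intro prod_zero) auto
  then show ?thesis using False unfolding ktensor_def by simp
qed

lemma mult_cnj_if: "(x::complex) * cnj (if P then 1 else 0) = (if P then x else 0)"
  by simp

lemma conj_by_id:
  assumes "j' \<in> Idx N d" "l' \<in> Idx N d"
  shows "conj_by N d (ktensor N (\<lambda>i x y. if x = y then 1 else 0)) \<rho> j' l' = \<rho> j' l'"
proof -
  have "conj_by N d (ktensor N (\<lambda>i x y. if x = y then 1 else 0)) \<rho> j' l'
     = (\<Sum>j\<in>Idx N d. \<Sum>l\<in>Idx N d. (if j' = j then 1 else 0) * \<rho> j l * cnj (if l' = l then 1 else 0))"
    unfolding conj_by_def using assms by (intro sum.cong refl) (simp add: ktensor_delta)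
  also have "\<dots> = (\<Sum>j\<in>Idx N d. if j' = j then (\<Sum>l\<in>Idx N d. if l' = l then \<rho> j l else 0) else 0)"
  proof (intro sum.cong refl)
    fix j show "(\<Sum>l\<in>Idx N d. (if j' = j then 1 else 0) * \<rho> j l * cnj (if l' = l then 1 else 0)) =
      (if j' = j then (\<Sum>l\<in>Idx N d. if l' = l then \<rho> j l else 0) else 0)"
      by (cases "j' = j") (auto simp: mult_cnj_if)
  qed
  also have "\<dots> = \<rho> j' l'" using assms
    by (simp add: sum.delta)
  finally show ?thesis .
qed

lemma qstate_SEP:
  assumes "locc_wf N dims P"
  shows "\<exists>f. SEP N dims f \<and> (\<forall>\<rho>. \<forall>j\<in>Idx N (qdim P r). \<forall>l\<in>Idx N (qdim P r).
             qstate N P \<rho> r w j l = f \<rho> j l)"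
proof (induction r arbitrary: w)
  case 0
  have I: "Idx N (qdim P 0) = Idx N dims"
    using assms unfolding locc_wf_def by (intro Idx_cong) auto
  have S: "SEP N dims (\<lambda>\<rho> j l. complex_of_real 1 * conj_by N dims (ktensor N (\<lambda>i x y. if x = y then 1 else 0)) \<rho> j l)"
    by (rule SEP.sterm) simp
  show ?case
    apply (rule exI[of _ "\<lambda>\<rho> j l. complex_of_real 1 * conj_by N dims (ktensor N (\<lambda>i x y. if x = y then 1 else 0)) \<rho> j l"])
    using I S by (simp add: conj_by_id)
next
  case (Suc r)
  from Suc obtain F where F: "\<And>w'. SEP N dims (F w')"
    "\<And>w' \<rho> j l. j \<in> Idx N (qdim P r) \<Longrightarrow> l \<in> Idx N (qdim P r) \<Longrightarrow> qstate N P \<rho> r w' j l = F w' \<rho> j l"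
    by metis
  define G where "G = (\<lambda>c \<rho> j l. \<Sum>w'\<in>Outs N P r. complex_of_real (gop P (Suc r) c w') * F w' \<rho> j l)"
  have G: "SEP N dims (G c)" for c
    unfolding G_def using assms unfolding locc_wf_def
    by (intro SEP_sum SEP_scale F) (auto simp: Outs_def)
  have ceq: "conj_by N (qdim P r) K (\<lambda>j l. \<Sum>w'\<in>Outs N P r. complex_of_real (gop P (Suc r) c w') * qstate N P \<rho> r w' j l) = conj_by N (qdim P r) K (G c \<rho>)" for K c \<rho>
    unfolding G_def by (rule conj_by_cong) (simp add: F(2))
  have eq: "qstate N P \<rho> (Suc r) w = (\<lambda>j' l'. \<Sum>c\<in>Ins N P (Suc r).
     \<Sum>k\<in>PiE {..<N} (\<lambda>i. {..<length (instr P (Suc r) i (w i) (c i))}).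
       conj_by N (qdim P r) (ktensor N (\<lambda>i. instr P (Suc r) i (w i) (c i) ! k i)) (G c \<rho>) j' l')" for \<rho>
    unfolding qstate.simps
    by (simp add: local_apply_def ceq)
  have "SEP N dims (\<lambda>\<rho> j' l'. \<Sum>c\<in>Ins N P (Suc r).
     \<Sum>k\<in>PiE {..<N} (\<lambda>i. {..<length (instr P (Suc r) i (w i) (c i))}).
       conj_by N (qdim P r) (ktensor N (\<lambda>i. instr P (Suc r) i (w i) (c i) ! k i)) (G c \<rho>) j' l')"
    by (intro SEP_sum SEP_conj[OF G]) (auto simp: Ins_def Idx_def intro!: finite_PiE)
  then show ?case using eq by auto
qed

lemma conj_by_proj_diag:
  "conj_by N d K (proj \<phi>) j j = complex_of_real ((cmod (\<Sum>a\<in>Idx N d. K j a * \<phi> a))\<^sup>2)"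
proof -
  have A: "conj_by N d K (proj \<phi>) j j = (\<Sum>a\<in>Idx N d. K j a * \<phi> a) * cnj (\<Sum>a\<in>Idx N d. K j a * \<phi> a)"
    unfolding conj_by_def proj_def cnj_sum
    by (simp add: sum_distrib_left sum_distrib_right mult_ac, rule sum.swap)
  have B: "complex_of_real ((cmod (\<Sum>a\<in>Idx N d. K j a * \<phi> a))\<^sup>2) = (\<Sum>a\<in>Idx N d. K j a * \<phi> a) * cnj (\<Sum>a\<in>Idx N d. K j a * \<phi> a)"
    by (rule complex_norm_square)
  show ?thesis unfolding B by (rule A)
qed

lemma row_product:
  assumes N: "N \<ge> 1" and ONB: "orthonormal_basis N dims B \<psi>" and fin: "finite B" and b': "b' \<in> B"
    and z: "\<forall>b\<in>B-{b'}. (\<Sum>a\<in>Idx N dims. (\<Prod>i<N. k i (a i)) * \<psi> b a) = 0"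
    and nz: "(\<Sum>a\<in>Idx N dims. (\<Prod>i<N. k i (a i)) * \<psi> b' a) \<noteq> 0"
  shows "product_state N dims (\<psi> b')"
proof -
  obtain \<alpha> where \<alpha>: "\<forall>a\<in>Idx N dims. cnj (\<Prod>i<N. k i (a i)) = (\<Sum>b\<in>B. \<alpha> b * \<psi> b a)"
    using ONB[unfolded orthonormal_basis_def, THEN conjunct2, rule_format, of "\<lambda>a. cnj (\<Prod>i<N. k i (a i))"] by auto
  have on: "\<And>b b''. b \<in> B \<Longrightarrow> b'' \<in> B \<Longrightarrow> jinner N dims (\<psi> b) (\<psi> b'') = (if b = b'' then 1 else 0)"
    using ONB unfolding orthonormal_basis_def orthonormal_family_def by blast
  have s: "(\<Sum>a\<in>Idx N dims. (\<Prod>i<N. k i (a i)) * \<psi> b'' a) = cnj (\<alpha> b'')" if "b'' \<in> B" for b''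
  proof -
    have "(\<Sum>a\<in>Idx N dims. (\<Prod>i<N. k i (a i)) * \<psi> b'' a)
        = (\<Sum>a\<in>Idx N dims. cnj (\<Sum>b\<in>B. \<alpha> b * \<psi> b a) * \<psi> b'' a)"
      using \<alpha> by (intro sum.cong refl) (metis complex_cnj_cnj)
    also have "\<dots> = (\<Sum>a\<in>Idx N dims. \<Sum>b\<in>B. cnj (\<alpha> b) * (cnj (\<psi> b a) * \<psi> b'' a))"
      by (simp add: cnj_sum sum_distrib_left sum_distrib_right mult_ac)
    also have "\<dots> = (\<Sum>b\<in>B. cnj (\<alpha> b) * jinner N dims (\<psi> b) (\<psi> b''))"
      unfolding jinner_def by (subst sum.swap) (simp add: sum_distrib_left)
    also have "\<dots> = (\<Sum>b\<in>B. if b = b'' then cnj (\<alpha> b) else 0)"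
      using that by (intro sum.cong refl) (simp add: on)
    also have "\<dots> = cnj (\<alpha> b'')" using that fin by simp
    finally show ?thesis .
  qed
  have a0: "\<alpha> b = 0" if "b \<in> B - {b'}" for b
    using s[of b] z that by auto
  have a1: "\<alpha> b' \<noteq> 0" using s[OF b'] nz by auto
  have rep: "\<psi> b' a = cnj (\<Prod>i<N. k i (a i)) * inverse (\<alpha> b')" if "a \<in> Idx N dims" for a
  proof -
    have "cnj (\<Prod>i<N. k i (a i)) = (\<Sum>b\<in>B. \<alpha> b * \<psi> b a)" using \<alpha> that by blast
    also have "\<dots> = \<alpha> b' * \<psi> b' a"
      using fin b' a0 by (subst sum.remove[OF fin b']) (auto intro!: sum.neutral)
    finally show ?thesis using a1 by (simp add: field_simps)
  qed
  define \<phi> where "\<phi> = (\<lambda>i x. cnj (k i x) * (if i = 0 then inverse (\<alpha> b') else 1))"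
  have "\<psi> b' a = (\<Prod>i<N. \<phi> i (a i))" if "a \<in> Idx N dims" for a
  proof -
    have "(\<Prod>i<N. \<phi> i (a i)) = (\<Prod>i<N. cnj (k i (a i))) * (\<Prod>i<N. if i = 0 then inverse (\<alpha> b') else 1)"
      unfolding \<phi>_def by (simp add: prod.distrib)
    also have "\<dots> = cnj (\<Prod>i<N. k i (a i)) * inverse (\<alpha> b')"
      using N by (simp add: cnj_prod prod.delta)
    finally show ?thesis using rep[OF that] by simp
  qed
  then show ?thesis unfolding product_state_def by blast
qed

lemma SEP_key:
  assumes "SEP N dims f" and N: "N \<ge> 1" and ONB: "orthonormal_basis N dims B \<psi>" and fin: "finite B"
    and b': "b' \<in> B" and J: "finite J"
  shows "(\<forall>\<phi>. \<exists>r\<ge>0. (\<Sum>j\<in>J. f (proj \<phi>) j j) = complex_of_real r) \<and>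
         ((\<forall>b\<in>B-{b'}. (\<Sum>j\<in>J. f (proj (\<psi> b)) j j) = 0) \<longrightarrow> (\<Sum>j\<in>J. f (proj (\<psi> b')) j j) \<noteq> 0
            \<longrightarrow> product_state N dims (\<psi> b'))"
  using assms(1)
proof (induction rule: SEP.induct)
  case zero
  then show ?case by auto
next
  case (sterm c k)
  define v where "v = (\<lambda>\<phi> j. \<Sum>a\<in>Idx N dims. ktensor N k j a * \<phi> a)"
  have val: "(\<Sum>j\<in>J. complex_of_real c * conj_by N dims (ktensor N k) (proj \<phi>) j j)
      = complex_of_real (c * (\<Sum>j\<in>J. (cmod (v \<phi> j))\<^sup>2))" for \<phi>
    unfolding v_def conj_by_proj_diag by (simp add: sum_distrib_left)
  show ?case
  proof (intro conjI allI impI)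
    fix \<phi> show "\<exists>r\<ge>0. (\<Sum>j\<in>J. complex_of_real c * conj_by N dims (ktensor N k) (proj \<phi>) j j) = complex_of_real r"
      using sterm by (intro exI[of _ "c * (\<Sum>j\<in>J. (cmod (v \<phi> j))\<^sup>2)"]) (auto simp: val intro!: sum_nonneg mult_nonneg_nonneg)
  next
    assume z: "\<forall>b\<in>B-{b'}. (\<Sum>j\<in>J. complex_of_real c * conj_by N dims (ktensor N k) (proj (\<psi> b)) j j) = 0"
      and nz: "(\<Sum>j\<in>J. complex_of_real c * conj_by N dims (ktensor N k) (proj (\<psi> b')) j j) \<noteq> 0"
    from nz have nz': "complex_of_real (c * (\<Sum>j\<in>J. (cmod (v (\<psi> b') j))\<^sup>2)) \<noteq> 0" unfolding val by assumption
    then have c0: "c > 0" using sterm.hyps by (cases "c = 0") auto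
    from nz' have "complex_of_real (c * (\<Sum>j\<in>J. (cmod (v (\<psi> b') j))\<^sup>2)) \<noteq> 0" by assumption
    then have "(\<Sum>j\<in>J. (cmod (v (\<psi> b') j))\<^sup>2) \<noteq> 0" by (metis mult_zero_right of_real_0)
    then obtain j where "j \<in> J" "(cmod (v (\<psi> b') j))\<^sup>2 \<noteq> 0" by (meson sum.neutral)
    then have j: "j \<in> J" "v (\<psi> b') j \<noteq> 0" by auto
    from z have z': "\<forall>b\<in>B-{b'}. complex_of_real (c * (\<Sum>j\<in>J. (cmod (v (\<psi> b) j))\<^sup>2)) = 0" unfolding val by assumption
    have "v (\<psi> b) j = 0" if "b \<in> B - {b'}" for b
    proof -
      have "complex_of_real (c * (\<Sum>j\<in>J. (cmod (v (\<psi> b) j))\<^sup>2)) = 0" using z' that by blast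
      then have "c * (\<Sum>j\<in>J. (cmod (v (\<psi> b) j))\<^sup>2) = 0" by (metis of_real_eq_0_iff)
      then have "(\<Sum>j\<in>J. (cmod (v (\<psi> b) j))\<^sup>2) = 0" using c0 by simp
      then have "(cmod (v (\<psi> b) j))\<^sup>2 = 0" using J j(1) by (subst (asm) sum_nonneg_eq_0_iff) auto
      then show ?thesis by simp
    qed
    then show "product_state N dims (\<psi> b')"
      using j(2) by (intro row_product[OF N ONB fin b', of "\<lambda>i x. k i (j i) x"]) (auto simp: v_def ktensor_def)
  qed
next
  case (add f g)
  show ?case
  proof (intro conjI allI impI)
    fix \<phi>
    obtain r1 r2 where "r1 \<ge> 0" "r2 \<ge> 0" "(\<Sum>j\<in>J. f (proj \<phi>) j j) = complex_of_real r1"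
      "(\<Sum>j\<in>J. g (proj \<phi>) j j) = complex_of_real r2" using conjunct1[OF add.IH(1)] conjunct1[OF add.IH(2)] by meson
    then show "\<exists>r\<ge>0. (\<Sum>j\<in>J. f (proj \<phi>) j j + g (proj \<phi>) j j) = complex_of_real r"
      by (intro exI[of _ "r1 + r2"]) (simp add: sum.distrib)
  next
    assume z: "\<forall>b\<in>B-{b'}. (\<Sum>j\<in>J. f (proj (\<psi> b)) j j + g (proj (\<psi> b)) j j) = 0"
      and nz: "(\<Sum>j\<in>J. f (proj (\<psi> b')) j j + g (proj (\<psi> b')) j j) \<noteq> 0"
    have zz: "(\<Sum>j\<in>J. f (proj (\<psi> b)) j j) = 0 \<and> (\<Sum>j\<in>J. g (proj (\<psi> b)) j j) = 0" if "b \<in> B - {b'}" for b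
    proof -
      have s0: "(\<Sum>j\<in>J. f (proj (\<psi> b)) j j) + (\<Sum>j\<in>J. g (proj (\<psi> b)) j j) = 0"
        using z that by (simp add: sum.distrib)
      obtain r1 r2 where "r1 \<ge> 0" "r2 \<ge> 0" and e1: "(\<Sum>j\<in>J. f (proj (\<psi> b)) j j) = complex_of_real r1"
        and e2: "(\<Sum>j\<in>J. g (proj (\<psi> b)) j j) = complex_of_real r2" using conjunct1[OF add.IH(1)] conjunct1[OF add.IH(2)] by meson
      moreover have "complex_of_real r1 + complex_of_real r2 = 0"
        using s0 unfolding e1 e2 .
      ultimately show ?thesis by (simp del: of_real_add add: of_real_add[symmetric])
    qed
    from nz have "(\<Sum>j\<in>J. f (proj (\<psi> b')) j j) \<noteq> 0 \<or> (\<Sum>j\<in>J. g (proj (\<psi> b')) j j) \<noteq> 0"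
      by (auto simp: sum.distrib)
    then show "product_state N dims (\<psi> b')"
    proof
      assume "(\<Sum>j\<in>J. f (proj (\<psi> b')) j j) \<noteq> 0"
      then show ?thesis using conjunct2[OF add.IH(1)] zz by blast
    next
      assume "(\<Sum>j\<in>J. g (proj (\<psi> b')) j j) \<noteq> 0"
      then show ?thesis using conjunct2[OF add.IH(2)] zz by blast
    qed
  qed
qed

definition protoP :: "nat \<Rightarrow> (nat\<Rightarrow>nat) \<Rightarrow> nat \<Rightarrow> (nat \<Rightarrow> 'b) \<Rightarrow> ('b \<Rightarrow> nat) \<Rightarrow> ('b \<Rightarrow> nat \<Rightarrow> nat \<Rightarrow> complex) \<Rightarrow> 'b locc" where
 "protoP N dims n g e \<Phi> = \<lparr>rounds = 1, qdim = (\<lambda>r i. if r = 0 then dims i else 1),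
    nin = (\<lambda>r i. 1), nout = (\<lambda>r i. n), gop = (\<lambda>r c w. 1),
    instr = (\<lambda>r i y x. if y < n then [\<lambda>a m. cnj (\<Phi> (g y) i m)] else []),
    post = (\<lambda>b w. if w = (\<lambda>i\<in>{..<N}. e b) then 1 else 0)\<rparr>"

lemma Idx_one: "Idx N (\<lambda>i. Suc 0) = {\<lambda>i\<in>{..<N}. 0}"
  unfolding Idx_def by (subst PiE_eq_singleton) auto

lemma protoP_output:
  assumes "e b < n" "g (e b) = b" "\<forall>j\<in>Idx N dims. \<psi> j = (\<Prod>i<N. \<Phi> b i (j i))"
  shows "locc_output N (protoP N dims n g e \<Phi>) \<rho> b =
     (\<Sum>j\<in>Idx N dims. \<Sum>l\<in>Idx N dims. cnj (\<psi> j) * \<rho> j l * \<psi> l)"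
proof -
  define P where "P = protoP N dims n g e \<Phi>"
  define z :: mindex where "z = (\<lambda>i\<in>{..<N}. 0)"
  define D :: mindex where "D = (\<lambda>i\<in>{..<N}. e b)"
  have DO: "D \<in> Outs N P 1" unfolding D_def P_def protoP_def Outs_def Idx_def using assms by auto
  have Ins: "Ins N P (Suc 0) = {z}" unfolding Ins_def P_def protoP_def z_def by (simp add: Idx_one)
  have Outs0: "Outs N P 0 = {z}" unfolding Outs_def P_def protoP_def z_def by (simp add: Idx_one)
  have Kset: "PiE {..<N} (\<lambda>i. {..<length (instr P (Suc 0) i (D i) (z i))}) = {z}"
    unfolding z_def D_def P_def protoP_def using assms by (subst PiE_eq_singleton) auto
  have Q0: "Idx N (qdim P 0) = Idx N dims" unfolding P_def protoP_def by simp
  have Q1: "Idx N (qdim P 1) = {z}" unfolding P_def protoP_def z_def by (simp add: Idx_one)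
  have kt: "ktensor N (\<lambda>i. instr P (Suc 0) i (D i) (z i) ! z i) z j = cnj (\<psi> j)" if "j \<in> Idx N dims" for j
    unfolding ktensor_def P_def protoP_def D_def z_def using assms that by (simp add: cnj_prod)
  have qs: "qstate N P \<rho> 1 D z z = (\<Sum>j\<in>Idx N dims. \<Sum>l\<in>Idx N dims. cnj (\<psi> j) * \<rho> j l * \<psi> l)"
  proof -
    have gP: "gop P r c w = 1" for r c w unfolding P_def protoP_def by simp
    have "qstate N P \<rho> 1 D z z = local_apply N P (Suc 0) D z (\<lambda>j l. \<rho> j l) z z"
      by (simp only: One_nat_def qstate.simps Ins Outs0 gP sum.insert sum.empty finite.emptyI empty_iff
           of_real_1 mult_1 add_0_right; simp)
    also have "\<dots> = conj_by N (qdim P 0) (ktensor N (\<lambda>i. instr P (Suc 0) i (D i) (z i) ! z i)) \<rho> z z"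
      unfolding local_apply_def Kset by simp
    also have "\<dots> = (\<Sum>j\<in>Idx N dims. \<Sum>l\<in>Idx N dims. cnj (\<psi> j) * \<rho> j l * \<psi> l)"
      unfolding conj_by_def Q0 by (intro sum.cong refl) (simp add: kt)
    finally show ?thesis .
  qed
  have post: "post P b w = (if w = D then 1 else 0)" for w
    unfolding P_def protoP_def D_def by simp
  have rP: "rounds P = 1" unfolding P_def protoP_def by simp
  have "locc_output N P \<rho> b = (\<Sum>w\<in>Outs N P 1. if w = D then qstate N P \<rho> 1 w z z else 0)"
    unfolding locc_output_def rP Q1 post by (intro sum.cong refl) auto
  also have "\<dots> = qstate N P \<rho> 1 D z z" using DO by (subst sum.delta) (auto simp: Outs_def)
  finally have "locc_output N P \<rho> b = qstate N P \<rho> 1 D z z" .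
  then show ?thesis using qs P_def by simp
qed

lemma quad_proj: "(\<Sum>j\<in>Idx N d. \<Sum>l\<in>Idx N d. cnj (u j) * proj w j l * u l)
   = jinner N d u w * cnj (jinner N d u w)"
  unfolding jinner_def proj_def cnj_sum
  by (simp add: sum_distrib_left sum_distrib_right mult_ac)

lemma quad_id: "(\<Sum>j\<in>Idx N d. \<Sum>l\<in>Idx N d. cnj (u j) * id_op j l * u l) = jinner N d u u"
proof -
  have "(\<Sum>j\<in>Idx N d. \<Sum>l\<in>Idx N d. cnj (u j) * id_op j l * u l)
      = (\<Sum>j\<in>Idx N d. \<Sum>l\<in>Idx N d. if j = l then cnj (u j) * u l else 0)"
    unfolding id_op_def by (intro sum.cong refl) simp
  also have "\<dots> = jinner N d u u" unfolding jinner_def by (simp add: sum.delta)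
  finally show ?thesis .
qed

lemma part2:
  assumes fin: "finite B" and ONB: "orthonormal_basis N dims B \<psi>"
    and prod: "\<forall>b\<in>B. product_state N dims (\<psi> b)"
  shows "\<exists>P :: 'b locc. locc_wf N dims P \<and> locc_unital N P B \<and> perfectly_distinguishes N P B \<psi>"
proof -
  define n where "n = card B"
  obtain g where g: "bij_betw g {..<n} B"
    using ex_bij_betw_nat_finite[OF fin] unfolding n_def lessThan_atLeast0 by blast
  define e where "e = the_inv_into {..<n} g"
  have e: "e b < n" "g (e b) = b" if "b \<in> B" for b
    using g that unfolding e_def bij_betw_def
    by (auto simp: the_inv_into_f_f)
  obtain \<Phi> where \<Phi>: "\<forall>b\<in>B. \<forall>j\<in>Idx N dims. \<psi> b j = (\<Prod>i<N. \<Phi> b i (j i))"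
    using prod unfolding product_state_def by metis
  define P where "P = protoP N dims n g e \<Phi>"
  have out: "locc_output N P \<rho> b = (\<Sum>j\<in>Idx N dims. \<Sum>l\<in>Idx N dims. cnj (\<psi> b j) * \<rho> j l * \<psi> b l)"
    if "b \<in> B" for b \<rho>
    unfolding P_def using e[OF that] \<Phi> that by (intro protoP_output) auto
  have on: "\<And>b b''. b \<in> B \<Longrightarrow> b'' \<in> B \<Longrightarrow> jinner N dims (\<psi> b) (\<psi> b'') = (if b = b'' then 1 else 0)"
    using ONB unfolding orthonormal_basis_def orthonormal_family_def by blast
  have "locc_wf N dims P" unfolding P_def protoP_def locc_wf_def by simp
  moreover have "locc_unital N P B"
    unfolding locc_unital_def using on by (simp add: out quad_id)
  moreover have "perfectly_distinguishes N P B \<psi>"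
    unfolding perfectly_distinguishes_def using on by (simp add: out quad_proj)
  ultimately show ?thesis by blast
qed

lemma part1:
  assumes N: "N \<ge> 1" and fin: "finite B" and ONB: "orthonormal_basis N dims B \<psi>"
    and wf: "locc_wf N dims P" and pd: "perfectly_distinguishes N P B \<psi>" and b': "b' \<in> B"
  shows "product_state N dims (\<psi> b')"
proof -
  define R where "R = rounds P"
  have "\<forall>w. \<exists>f. SEP N dims f \<and> (\<forall>\<rho>. \<forall>j\<in>Idx N (qdim P R). \<forall>l\<in>Idx N (qdim P R).
             qstate N P \<rho> R w j l = f \<rho> j l)"
    using qstate_SEP[OF wf] by blast
  then obtain F where F: "\<And>w. SEP N dims (F w)"
    "\<And>w \<rho> j l. j \<in> Idx N (qdim P R) \<Longrightarrow> l \<in> Idx N (qdim P R) \<Longrightarrow> qstate N P \<rho> R w j l = F w \<rho> j l"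
    by metis
  define G where "G = (\<lambda>\<rho> j l. \<Sum>w\<in>Outs N P R. complex_of_real (post P b' w) * F w \<rho> j l)"
  have G: "SEP N dims G"
    unfolding G_def using wf unfolding locc_wf_def
    by (intro SEP_sum SEP_scale F) (auto simp: Outs_def)
  have out: "locc_output N P \<rho> b' = (\<Sum>j\<in>Idx N (qdim P R). G \<rho> j j)" for \<rho>
  proof -
    have "locc_output N P \<rho> b' = (\<Sum>w\<in>Outs N P R. \<Sum>j\<in>Idx N (qdim P R). complex_of_real (post P b' w) * F w \<rho> j j)"
      unfolding locc_output_def R_def[symmetric] sum_distrib_left
      by (intro sum.cong refl) (simp add: F(2))
    also have "\<dots> = (\<Sum>j\<in>Idx N (qdim P R). G \<rho> j j)"
      unfolding G_def by (rule sum.swap)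
    finally show ?thesis .
  qed
  note key = SEP_key[OF G N ONB fin b' finite_Idx[of N "qdim P R"]]
  have h1: "\<forall>b\<in>B - {b'}. (\<Sum>j\<in>Idx N (qdim P R). G (proj (\<psi> b)) j j) = 0"
    using pd b' unfolding perfectly_distinguishes_def out[symmetric] by auto
  have h2: "(\<Sum>j\<in>Idx N (qdim P R). G (proj (\<psi> b')) j j) \<noteq> 0"
    using pd b' unfolding perfectly_distinguishes_def out[symmetric] by auto
  show ?thesis by (rule mp[OF mp[OF key[THEN conjunct2] h1] h2])
qed

theorem theorem1:
  fixes N :: nat and dims :: "nat \<Rightarrow> nat" and B :: "'b set" and \<psi> :: "'b \<Rightarrow> jvec"
  assumes "N \<ge> 1"
    and "finite B"
    and "card B = (\<Prod>i<N. dims i)"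
    and "orthonormal_basis N dims B \<psi>"
  shows "((\<exists>P :: 'b locc. locc_wf N dims P \<and> perfectly_distinguishes N P B \<psi>)
            \<longrightarrow> (\<forall>b\<in>B. product_state N dims (\<psi> b)))
       \<and> ((\<forall>b\<in>B. product_state N dims (\<psi> b))
            \<longrightarrow> (\<exists>P :: 'b locc. locc_wf N dims P \<and> locc_unital N P B
                                  \<and> perfectly_distinguishes N P B \<psi>))"
  using part1[OF assms(1,2,4)] part2[OF assms(2,4)] by blast

end
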